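(* Let $\epsilon\in(0,1/2]$, $d\ge1$, and let $f$ be the binary-tree function of depth $d$ on $n=2^{d+1}-2$ variables, with unit costs and $p_i=\frac{1+\epsilon}{2}$ for all $i$. Let $q=\left(\frac{1+\epsilon}{2}\right)^d$ and suppose $q\le\epsilon$. Then $$\mathsf{OPT}_{\mathcal N}(f,c,p)\ge \frac{\epsilon^2}{8q}.$$
   Context: Stochastic Boolean Function Evaluation setup: the input $x\in\{0,1\}^n$ has independent coordinates with $\Pr(x_i=1)=p_i$; testing $x_i$ costs $c_i$ (here $c_i=1$). A non-adaptive strategy is a fixed permutation of $[n]$; variables are tested in that order until $f(x)$ is determined (i.e. $f(x')=f(x)$ for all $x'$ agreeing with $x$ on tested coordinates). $\mathsf{OPT}_{\mathcal N}(f,c,p)$ is the minimum expected total test cost over non-adaptive strategies. Binary-tree function of depth $d$: in the complete binary tree of depth $d$ (root at depth $0$, $2^d$ leaves), the $n=2^{d+1}-2$ edges are numbered $1,\dots,n$ and variable $x_i$ is associated with edge $i$; a leaf is alive if $x_i=1$ for every edge on its root-to-leaf path, and $f(x)=1$ iff some leaf is alive. *)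

theory Defs
  imports Complex_Main
begin

text \<open>Variables are indexed by 1..n. An input is a Boolean assignment to these
  variables (set to False outside 1..n so that the input space is finite).\<close>

definition inputs :: "nat \<Rightarrow> (nat \<Rightarrow> bool) set" where
  "inputs n = {x. \<forall>i. i \<notin> {1..n} \<longrightarrow> \<not> x i}"

definition prob_input :: "nat \<Rightarrow> (nat \<Rightarrow> real) \<Rightarrow> (nat \<Rightarrow> bool) \<Rightarrow> real" where
  "prob_input n p x = (\<Prod>i\<in>{1..n}. if x i then p i else 1 - p i)"

definition strategies :: "nat \<Rightarrow> nat list set" where
  "strategies n = {\<sigma>. distinct \<sigma> \<and> set \<sigma> = {1..n}}"

definition determined :: "((nat \<Rightarrow> bool) \<Rightarrow> bool) \<Rightarrow> nat \<Rightarrow> nat set \<Rightarrow> (nat \<Rightarrow> bool) \<Rightarrow> bool" where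
  "determined f n S x = (\<forall>y\<in>inputs n. (\<forall>i\<in>S. y i = x i) \<longrightarrow> f y = f x)"

definition num_tests :: "((nat \<Rightarrow> bool) \<Rightarrow> bool) \<Rightarrow> nat \<Rightarrow> nat list \<Rightarrow> (nat \<Rightarrow> bool) \<Rightarrow> nat" where
  "num_tests f n \<sigma> x = (LEAST k. determined f n (set (take k \<sigma>)) x)"

definition strat_cost :: "((nat \<Rightarrow> bool) \<Rightarrow> bool) \<Rightarrow> nat \<Rightarrow> (nat \<Rightarrow> real) \<Rightarrow> nat list \<Rightarrow> (nat \<Rightarrow> bool) \<Rightarrow> real" where
  "strat_cost f n c \<sigma> x = (\<Sum>i\<leftarrow>take (num_tests f n \<sigma> x) \<sigma>. c i)"

definition expected_cost :: "((nat \<Rightarrow> bool) \<Rightarrow> bool) \<Rightarrow> nat \<Rightarrow> (nat \<Rightarrow> real) \<Rightarrow> (nat \<Rightarrow> real) \<Rightarrow> nat list \<Rightarrow> real" where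
  "expected_cost f n c p \<sigma> = (\<Sum>x\<in>inputs n. prob_input n p x * strat_cost f n c \<sigma> x)"

definition OPT_N :: "((nat \<Rightarrow> bool) \<Rightarrow> bool) \<Rightarrow> nat \<Rightarrow> (nat \<Rightarrow> real) \<Rightarrow> (nat \<Rightarrow> real) \<Rightarrow> real" where
  "OPT_N f n c p = Min (expected_cost f n c p ` strategies n)"

text \<open>Nodes of the complete binary tree are heap
  indices 1..2^(d+1)-1 (root 1, children of v are 2v and 2v+1); the edge into node
  v (v >= 2) is variable v - 1, so edges are numbered 1..2^(d+1)-2. Leaves are nodes
  2^d..2^(d+1)-1, and the edges on the root-to-leaf path of leaf l are those into the
  nodes l div 2^k for k < d.\<close>
definition bintree_fun :: "nat \<Rightarrow> (nat \<Rightarrow> bool) \<Rightarrow> bool" where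
  "bintree_fun d x = (\<exists>l\<in>{2^d..<2^(d+1)}. \<forall>k<d. x (l div 2^k - 1))"

end

theory Submission
  imports Defs
begin


definition inp :: "nat set \<Rightarrow> (nat\<Rightarrow>bool) set" where
  "inp I = {x. \<forall>i. i \<notin> I \<longrightarrow> \<not> x i}"
definition mu :: "(nat\<Rightarrow>real) \<Rightarrow> nat set \<Rightarrow> (nat\<Rightarrow>bool) \<Rightarrow> real" where
  "mu p I x = (\<Prod>i\<in>I. if x i then p i else 1 - p i)"
definition Pr :: "(nat\<Rightarrow>real) \<Rightarrow> nat set \<Rightarrow> ((nat\<Rightarrow>bool)\<Rightarrow>bool) \<Rightarrow> real" where
  "Pr p I P = (\<Sum>x\<in>inp I. mu p I x * (if P x then 1 else 0))"
definition dep :: "nat set \<Rightarrow> ((nat\<Rightarrow>bool)\<Rightarrow>bool) \<Rightarrow> bool" where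
  "dep J P = (\<forall>x y. (\<forall>i\<in>J. x i = y i) \<longrightarrow> P x = P y)"

lemma finite_inp: "finite I \<Longrightarrow> finite (inp I)"
proof -
  assume "finite I"
  have "inp I \<subseteq> (\<lambda>S i. i \<in> S) ` Pow I"
  proof
    fix x assume "x \<in> inp I"
    hence "x = (\<lambda>i. i \<in> {i\<in>I. x i})" by (auto simp: inp_def)
    thus "x \<in> (\<lambda>S i. i \<in> S) ` Pow I" by blast
  qed
  thus ?thesis using \<open>finite I\<close> finite_subset by blast
qed

lemma Pr_split:
  assumes fI: "finite I" and fJ: "finite J" and dis: "I \<inter> J = {}"
    and dP: "dep I P" and dQ: "dep J Q"
  shows "Pr p (I \<union> J) (\<lambda>x. P x \<and> Q x) = Pr p I P * Pr p J Q"
proof -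
  define h where "h = (\<lambda>(a::nat\<Rightarrow>bool, b::nat\<Rightarrow>bool). (\<lambda>i. a i \<or> b i))"
  have bij: "bij_betw h (inp I \<times> inp J) (inp (I \<union> J))"
  proof (rule bij_betw_byWitness[where f'="\<lambda>x. (\<lambda>i. i\<in>I \<and> x i, \<lambda>i. i\<in>J \<and> x i)"])
    show "\<forall>a\<in>inp I \<times> inp J. (\<lambda>x. (\<lambda>i. i\<in>I \<and> x i, \<lambda>i. i\<in>J \<and> x i)) (h a) = a"
      using dis by (auto simp: h_def inp_def fun_eq_iff)
    show "\<forall>a'\<in>inp (I \<union> J). h ((\<lambda>x. (\<lambda>i. i\<in>I \<and> x i, \<lambda>i. i\<in>J \<and> x i)) a') = a'"
      by (auto simp: h_def inp_def fun_eq_iff)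
    show "h ` (inp I \<times> inp J) \<subseteq> inp (I \<union> J)"
      by (auto simp: h_def inp_def)
    show "(\<lambda>x. (\<lambda>i. i\<in>I \<and> x i, \<lambda>i. i\<in>J \<and> x i)) ` inp (I \<union> J) \<subseteq> inp I \<times> inp J"
      by (auto simp: inp_def)
  qed
  have key: "mu p (I \<union> J) (h (a,b)) * (if P (h (a,b)) \<and> Q (h (a,b)) then 1 else 0)
      = (mu p I a * (if P a then 1 else 0)) * (mu p J b * (if Q b then 1 else 0))"
    if a: "a \<in> inp I" and b: "b \<in> inp J" for a b
  proof -
    have ha: "\<forall>i\<in>I. h (a,b) i = a i" using b dis by (auto simp: h_def inp_def)
    have hb: "\<forall>i\<in>J. h (a,b) i = b i" using a dis by (auto simp: h_def inp_def)
    have "mu p (I \<union> J) (h (a,b)) = mu p I (h (a,b)) * mu p J (h (a,b))"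
      unfolding mu_def using fI fJ dis by (rule prod.union_disjoint)
    also have "mu p I (h (a,b)) = mu p I a" unfolding mu_def using ha by (intro prod.cong) auto
    also have "mu p J (h (a,b)) = mu p J b" unfolding mu_def using hb by (intro prod.cong) auto
    finally have m: "mu p (I \<union> J) (h (a,b)) = mu p I a * mu p J b" .
    have "P (h (a,b)) = P a" using dP ha unfolding dep_def by blast
    moreover have "Q (h (a,b)) = Q b" using dQ hb unfolding dep_def by blast
    ultimately show ?thesis using m by simp
  qed
  have "Pr p (I \<union> J) (\<lambda>x. P x \<and> Q x) = (\<Sum>z\<in>inp I \<times> inp J. mu p (I \<union> J) (h z) * (if P (h z) \<and> Q (h z) then 1 else 0))"
    unfolding Pr_def using sum.reindex_bij_betw[OF bij, symmetric] by simp
  also have "\<dots> = (\<Sum>z\<in>inp I \<times> inp J. (mu p I (fst z) * (if P (fst z) then 1 else 0)) * (mu p J (snd z) * (if Q (snd z) then 1 else 0)))"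
    apply (rule sum.cong[OF refl])
    subgoal for z using key[of "fst z" "snd z"] by (simp add: mem_Times_iff)
    done
  also have "\<dots> = Pr p I P * Pr p J Q"
    unfolding Pr_def sum_product sum.cartesian_product by (simp add: case_prod_beta)
  finally show ?thesis .
qed

lemma inp_empty: "inp {} = {\<lambda>_. False}"
  by (auto simp: inp_def)

lemma inp_single: "inp {j} = {\<lambda>_. False, \<lambda>i. i = j}"
  by (auto simp: inp_def fun_eq_iff)

lemma Pr_single: "Pr p {j} (\<lambda>x. x j) = p j"
proof -
  have ne: "(\<lambda>_. False) \<noteq> (\<lambda>i::nat. i = j)" by (auto simp: fun_eq_iff)
  show ?thesis unfolding Pr_def inp_single mu_def using ne by simp
qed

lemma Pr_single_true: "Pr p {j} (\<lambda>x. True) = 1"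
proof -
  have ne: "(\<lambda>_. False) \<noteq> (\<lambda>i::nat. i = j)" by (auto simp: fun_eq_iff)
  show ?thesis unfolding Pr_def inp_single mu_def using ne by simp
qed

lemma dep_true: "dep J (\<lambda>x. True)" by (simp add: dep_def)

lemma Pr_true: "finite I \<Longrightarrow> Pr p I (\<lambda>x. True) = 1"
proof (induction I rule: finite_induct)
  case empty
  show ?case by (simp add: Pr_def inp_empty mu_def)
next
  case (insert j I)
  have "Pr p (I \<union> {j}) (\<lambda>x. True \<and> True) = Pr p I (\<lambda>x. True) * Pr p {j} (\<lambda>x. True)"
    using insert by (intro Pr_split) (auto simp: dep_true)
  thus ?case using insert Pr_single_true by simp
qed

lemma Pr_compl: "finite I \<Longrightarrow> Pr p I (\<lambda>x. \<not> P x) = 1 - Pr p I P"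
proof -
  assume f: "finite I"
  have "Pr p I (\<lambda>x. \<not> P x) = Pr p I (\<lambda>x. True) - Pr p I P"
    unfolding Pr_def sum_subtractf[symmetric] by (intro sum.cong) auto
  thus ?thesis using Pr_true[OF f] by simp
qed

lemma Pr_marg:
  assumes "finite I" "J \<subseteq> I" "dep J P"
  shows "Pr p I P = Pr p J P"
proof -
  have "Pr p (J \<union> (I - J)) (\<lambda>x. P x \<and> True) = Pr p J P * Pr p (I - J) (\<lambda>x. True)"
    using assms finite_subset by (intro Pr_split) (auto simp: dep_true)
  moreover have "J \<union> (I - J) = I" using assms by auto
  ultimately show ?thesis using Pr_true[of "I - J"] assms by simp
qed

lemma Pr_cong: "(\<And>x. x \<in> inp I \<Longrightarrow> P x = Q x) \<Longrightarrow> Pr p I P = Pr p I Q"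
  unfolding Pr_def by (intro sum.cong) auto

lemma Pr_allE:
  "finite E \<Longrightarrow> Pr p E (\<lambda>x. \<forall>i\<in>E. x i) = (\<Prod>i\<in>E. p i)"
proof (induction E rule: finite_induct)
  case empty
  show ?case by (simp add: Pr_def inp_empty mu_def)
next
  case (insert j E)
  have "Pr p ({j} \<union> E) (\<lambda>x. x j \<and> (\<forall>i\<in>E. x i)) = Pr p {j} (\<lambda>x. x j) * Pr p E (\<lambda>x. \<forall>i\<in>E. x i)"
    using insert by (intro Pr_split) (auto simp: dep_def)
  moreover have "{j} \<union> E = insert j E" by auto
  moreover have "(\<lambda>x. x j \<and> (\<forall>i\<in>E. x i)) = (\<lambda>x. \<forall>i\<in>insert j E. x i)" by auto
  ultimately have "Pr p (insert j E) (\<lambda>x. \<forall>i\<in>insert j E. x i) = p j * (\<Prod>i\<in>E. p i)"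
    using insert.IH Pr_single by metis
  thus ?case using insert prod.insert by metis
qed

lemma Pr_path:
  assumes "finite I" "E \<subseteq> I"
  shows "Pr p I (\<lambda>x. \<forall>i\<in>E. x i) = (\<Prod>i\<in>E. p i)"
proof -
  have d: "dep E (\<lambda>x. \<forall>i\<in>E. x i)" unfolding dep_def by auto
  have "Pr p I (\<lambda>x. \<forall>i\<in>E. x i) = Pr p E (\<lambda>x. \<forall>i\<in>E. x i)"
    by (rule Pr_marg[OF assms d])
  moreover have "finite E" using assms finite_subset by blast
  ultimately show ?thesis using Pr_allE by simp
qed

lemma Pr_or:
  assumes "finite I" "finite J" "I \<inter> J = {}" "dep I P" "dep J Q"
  shows "Pr p (I \<union> J) (\<lambda>x. P x \<or> Q x) = 1 - (1 - Pr p I P) * (1 - Pr p J Q)"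
proof -
  have "Pr p (I \<union> J) (\<lambda>x. \<not> P x \<and> \<not> Q x) = Pr p I (\<lambda>x. \<not> P x) * Pr p J (\<lambda>x. \<not> Q x)"
    using assms by (intro Pr_split) (auto simp: dep_def)
  moreover have "Pr p (I \<union> J) (\<lambda>x. P x \<or> Q x) = 1 - Pr p (I \<union> J) (\<lambda>x. \<not> P x \<and> \<not> Q x)"
    using Pr_compl[of "I \<union> J" p "\<lambda>x. \<not> P x \<and> \<not> Q x"] assms by simp
  ultimately show ?thesis using Pr_compl assms by simp
qed



fun alive :: "nat \<Rightarrow> nat \<Rightarrow> (nat\<Rightarrow>bool) \<Rightarrow> bool" where
  "alive v 0 x = True"
| "alive v (Suc h) x = ((x (2*v-1) \<and> alive (2*v) h x) \<or> (x (2*v) \<and> alive (2*v+1) h x))"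

fun C :: "nat \<Rightarrow> nat \<Rightarrow> nat set" where
  "C v 0 = {}"
| "C v (Suc h) = insert (2*v-1) (insert (2*v) (C (2*v) h \<union> C (2*v+1) h))"

lemma finite_C: "finite (C v h)"
  by (induction h arbitrary: v) auto

lemma dep_alive: "dep (C v h) (alive v h)"
proof (induction h arbitrary: v)
  case 0 thus ?case by (simp add: dep_def)
next
  case (Suc h)
  show ?case unfolding dep_def
  proof (intro allI impI)
    fix x y :: "nat \<Rightarrow> bool" assume a: "\<forall>i\<in>C v (Suc h). x i = y i"
    have "alive (2*v) h x = alive (2*v) h y" using Suc[of "2*v"] a unfolding dep_def by simp
    moreover have "alive (2*v+1) h x = alive (2*v+1) h y" using Suc[of "2*v+1"] a unfolding dep_def by simp
    ultimately show "alive v (Suc h) x = alive v (Suc h) y" using a by simp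
  qed
qed

lemma div_le_half: "(j::nat) \<ge> 1 \<Longrightarrow> (u::nat) div 2^j \<le> u div 2"
proof -
  assume "j \<ge> 1"
  hence "(2::nat) \<le> 2^j" by (metis power_increasing power_one_right zero_less_numeral one_le_numeral)
  thus ?thesis by (intro div_le_mono2) auto
qed

lemma C_desc: "v \<ge> 1 \<Longrightarrow> e \<in> C v h \<Longrightarrow> \<exists>j. 1 \<le> j \<and> j \<le> h \<and> (e+1) div 2^j = v"
proof (induction h arbitrary: v)
  case 0 thus ?case by simp
next
  case (Suc h)
  show ?case
  proof (cases "e = 2*v-1 \<or> e = 2*v")
    case True
    hence "(e+1) div 2^1 = v" using Suc.prems by auto
    thus ?thesis by (intro exI[of _ 1]) auto
  next
    case False
    hence "e \<in> C (2*v) h \<or> e \<in> C (2*v+1) h" using Suc.prems by auto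
    then obtain w j where w: "w = 2*v \<or> w = 2*v+1" and j: "1 \<le> j" "j \<le> h" "(e+1) div 2^j = w"
      using Suc.IH Suc.prems by (metis le_add1 le_trans mult_2 one_le_mult_iff)
    have "(e+1) div 2^(Suc j) = (e+1) div 2^j div 2" by (metis div_mult2_eq power_Suc2)
    hence "(e+1) div 2^(Suc j) = w div 2" using j(3) by simp
    also have "\<dots> = v" using w by auto
    finally show ?thesis using j by (intro exI[of _ "Suc j"]) auto
  qed
qed

lemma C_bound: "v \<ge> 1 \<Longrightarrow> e \<in> C v h \<Longrightarrow> 1 \<le> e \<and> e + 1 < (v+1) * 2^h"
proof (induction h arbitrary: v)
  case 0 thus ?case by simp
next
  case (Suc h)
  show ?case
  proof (cases "e = 2*v-1 \<or> e = 2*v")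
    case True
    have "(v+1) * 2 \<le> (v+1) * 2^Suc h" by (intro mult_le_mono2) (simp add: Suc_le_eq)
    moreover have "1 \<le> e \<and> e + 1 < (v+1) * 2" using True Suc.prems by auto
    ultimately show ?thesis by linarith
  next
    case False
    hence "e \<in> C (2*v) h \<or> e \<in> C (2*v+1) h" using Suc.prems by auto
    thus ?thesis
    proof
      assume "e \<in> C (2*v) h"
      hence "1 \<le> e \<and> e + 1 < (2*v+1) * 2^h" using Suc.IH[of "2*v"] Suc.prems by auto
      moreover have "(2*v+1) * 2^h \<le> (v+1) * 2^Suc h" by simp
      ultimately show ?thesis by linarith
    next
      assume "e \<in> C (2*v+1) h"
      hence "1 \<le> e \<and> e + 1 < (2*v+1+1) * 2^h" using Suc.IH[of "2*v+1"] Suc.prems by auto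
      moreover have "(2*v+1+1) * 2^h = (v+1) * 2^Suc h" by simp
      ultimately show ?thesis by linarith
    qed
  qed
qed

lemma desc_disj:
  assumes "v \<ge> 1" "(j::nat) \<ge> 1" "j' \<ge> 1" "(u::nat) div 2^j = 2*v" "u div 2^j' = 2*v+1"
  shows False
proof (cases j j' rule: linorder_cases)
  case less
  define k where "k = j' - j"
  have k: "j' = j + k" "k \<ge> 1" using less by (auto simp: k_def)
  have "u div 2^j' = (u div 2^j) div 2^k" by (simp add: k power_add div_mult2_eq)
  also have "\<dots> \<le> (2*v) div 2" using div_le_half[OF k(2), of "2*v"] assms by simp
  finally show False using assms by simp
next
  case equal thus False using assms by simp
next
  case greater
  define k where "k = j - j'"
  have k: "j = j' + k" "k \<ge> 1" using greater by (auto simp: k_def)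
  have "u div 2^j = (u div 2^j') div 2^k" by (simp add: k power_add div_mult2_eq)
  also have "\<dots> \<le> (2*v+1) div 2" using div_le_half[OF k(2), of "2*v+1"] assms by simp
  finally show False using assms by simp
qed

lemma C_disj: "v \<ge> 1 \<Longrightarrow> C (2*v) h \<inter> C (2*v+1) h = {}"
proof (rule ccontr)
  assume v: "v \<ge> 1" and "C (2*v) h \<inter> C (2*v+1) h \<noteq> {}"
  then obtain e where "e \<in> C (2*v) h" "e \<in> C (2*v+1) h" by blast
  moreover have "2*v \<ge> 1" "2*v+1 \<ge> 1" using v by auto
  ultimately obtain j j' where "1 \<le> j" "(e+1) div 2^j = 2*v" "1 \<le> j'" "(e+1) div 2^j' = 2*v+1"
    using C_desc[of "2*v" e h] C_desc[of "2*v+1" e h] by blast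
  thus False using desc_disj[OF v] by blast
qed

lemma not_in_C:
  assumes v: "v \<ge> 1"
  shows "2*v-1 \<notin> C (2*v) h" "2*v-1 \<notin> C (2*v+1) h" "2*v \<notin> C (2*v) h" "2*v \<notin> C (2*v+1) h"
proof -
  have v2: "2*v \<ge> 1" "2*v+1 \<ge> 1" using v by auto
  { fix e w assume "e \<in> C w h" "w \<ge> 1"
    then obtain j where "1 \<le> j" "(e+1) div 2^j = w" using C_desc by blast
    hence "w \<le> (e+1) div 2" using div_le_half by metis }
  note * = this
  show "2*v-1 \<notin> C (2*v) h" using *[of "2*v-1" "2*v"] v by auto
  show "2*v-1 \<notin> C (2*v+1) h" using *[of "2*v-1" "2*v+1"] v by auto
  show "2*v \<notin> C (2*v) h" using *[of "2*v" "2*v"] v by auto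
  show "2*v \<notin> C (2*v+1) h" using *[of "2*v" "2*v+1"] v by auto
qed

fun a :: "real \<Rightarrow> nat \<Rightarrow> real" where
  "a p 0 = 1"
| "a p (Suc h) = 1 - (1 - p * a p h)^2"

lemma Pr_alive: "v \<ge> 1 \<Longrightarrow> Pr (\<lambda>_. p) (C v h) (alive v h) = a p h"
proof (induction h arbitrary: v)
  case 0
  have "Pr (\<lambda>_. p) {} (\<lambda>x. True) = 1" by (rule Pr_true) simp
  thus ?case by simp
next
  case (Suc h)
  note v = Suc.prems
  define I1 where "I1 = {2*v-1} \<union> C (2*v) h"
  define I2 where "I2 = {2*v} \<union> C (2*v+1) h"
  have CI: "C v (Suc h) = I1 \<union> I2" by (auto simp: I1_def I2_def)
  have dis: "I1 \<inter> I2 = {}" using C_disj[OF v, of h] not_in_C[OF v, of h] v by (auto simp: I1_def I2_def)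
  have f1: "finite I1" "finite I2" by (auto simp: I1_def I2_def finite_C)
  have dA: "dep I1 (\<lambda>x. x (2*v-1) \<and> alive (2*v) h x)"
    using dep_alive[of "2*v" h] unfolding dep_def I1_def by blast
  have dB: "dep I2 (\<lambda>x. x (2*v) \<and> alive (2*v+1) h x)"
    using dep_alive[of "2*v+1" h] unfolding dep_def I2_def by blast
  have PA: "Pr (\<lambda>_. p) I1 (\<lambda>x. x (2*v-1) \<and> alive (2*v) h x) = p * a p h"
  proof -
    have "Pr (\<lambda>_. p) I1 (\<lambda>x. x (2*v-1) \<and> alive (2*v) h x) = Pr (\<lambda>_. p) {2*v-1} (\<lambda>x. x (2*v-1)) * Pr (\<lambda>_. p) (C (2*v) h) (alive (2*v) h)"
      unfolding I1_def using not_in_C[OF v, of h] dep_alive[of "2*v" h]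
      by (intro Pr_split) (auto simp: finite_C dep_def)
    thus ?thesis using Pr_single[of "\<lambda>_. p"] Suc.IH[of "2*v"] v by simp
  qed
  have PB: "Pr (\<lambda>_. p) I2 (\<lambda>x. x (2*v) \<and> alive (2*v+1) h x) = p * a p h"
  proof -
    have "Pr (\<lambda>_. p) I2 (\<lambda>x. x (2*v) \<and> alive (2*v+1) h x) = Pr (\<lambda>_. p) {2*v} (\<lambda>x. x (2*v)) * Pr (\<lambda>_. p) (C (2*v+1) h) (alive (2*v+1) h)"
      unfolding I2_def using not_in_C[OF v, of h] dep_alive[of "2*v+1" h]
      by (intro Pr_split) (auto simp: finite_C dep_def)
    thus ?thesis using Pr_single[of "\<lambda>_. p"] Suc.IH[of "2*v+1"] v by simp
  qed
  have "Pr (\<lambda>_. p) (I1 \<union> I2) (\<lambda>x. (x (2*v-1) \<and> alive (2*v) h x) \<or> (x (2*v) \<and> alive (2*v+1) h x))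
      = 1 - (1 - p * a p h) * (1 - p * a p h)"
    using Pr_or[OF f1 dis dA dB] PA PB by simp
  thus ?case using CI by (simp add: power2_eq_square)
qed



lemma alive_iff: "v \<ge> 1 \<Longrightarrow> alive v h x \<longleftrightarrow> (\<exists>l\<in>{v*2^h..<(v+1)*2^h}. \<forall>k<h. x (l div 2^k - 1))"
proof (induction h arbitrary: v)
  case 0 thus ?case by auto
next
  case (Suc h)
  note v = Suc.prems
  have v2: "2*v \<ge> 1" "2*v+1 \<ge> 1" using v by auto
  have dv1: "l div 2^h = 2*v" if "l \<in> {2*v*2^h..<(2*v+1)*2^h}" for l
    using that by (intro div_nat_eqI) (auto simp: mult.commute)
  have dv2: "l div 2^h = 2*v+1" if "l \<in> {(2*v+1)*2^h..<(2*v+1+1)*2^h}" for l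
    using that by (intro div_nat_eqI) (auto simp: mult.commute)
  have allS: "(\<forall>k<Suc h. x (l div 2^k - 1)) \<longleftrightarrow> (\<forall>k<h. x (l div 2^k - 1)) \<and> x (l div 2^h - 1)" for l
    by (auto simp: less_Suc_eq)
  have r1: "v*2^Suc h = 2*v*2^h" "(v+1)*2^Suc h = (2*v+1+1)*2^h" by auto
  show ?case
  proof
    assume "alive v (Suc h) x"
    hence "(x (2*v-1) \<and> alive (2*v) h x) \<or> (x (2*v) \<and> alive (2*v+1) h x)" by simp
    thus "\<exists>l\<in>{v*2^Suc h..<(v+1)*2^Suc h}. \<forall>k<Suc h. x (l div 2^k - 1)"
    proof
      assume A: "x (2*v-1) \<and> alive (2*v) h x"
      then obtain l where l: "l \<in> {2*v*2^h..<(2*v+1)*2^h}" "\<forall>k<h. x (l div 2^k - 1)"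
        using Suc.IH[OF v2(1)] by auto
      have "\<forall>k<Suc h. x (l div 2^k - 1)" using allS l A dv1[OF l(1)] by simp
      moreover have "l \<in> {v*2^Suc h..<(v+1)*2^Suc h}" using l(1) unfolding r1 by auto
      ultimately show ?thesis by blast
    next
      assume A: "x (2*v) \<and> alive (2*v+1) h x"
      then obtain l where l: "l \<in> {(2*v+1)*2^h..<(2*v+1+1)*2^h}" "\<forall>k<h. x (l div 2^k - 1)"
        using Suc.IH[OF v2(2)] by auto
      have "l div 2^h - 1 = 2*v" using dv2[OF l(1)] by simp
      hence "\<forall>k<Suc h. x (l div 2^k - 1)" using allS l A by simp
      moreover have "l \<in> {v*2^Suc h..<(v+1)*2^Suc h}" using l(1) unfolding r1 by auto
      ultimately show ?thesis by blast
    qed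
  next
    assume "\<exists>l\<in>{v*2^Suc h..<(v+1)*2^Suc h}. \<forall>k<Suc h. x (l div 2^k - 1)"
    then obtain l where l: "l \<in> {2*v*2^h..<(2*v+1+1)*2^h}" "\<forall>k<h. x (l div 2^k - 1)" "x (l div 2^h - 1)"
      unfolding r1 allS by blast
    show "alive v (Suc h) x"
    proof (cases "l < (2*v+1)*2^h")
      case True
      hence l1: "l \<in> {2*v*2^h..<(2*v+1)*2^h}" using l by auto
      hence "alive (2*v) h x" using Suc.IH[OF v2(1)] l by blast
      moreover have "x (2*v-1)" using l(3) dv1[OF l1] by simp
      ultimately show ?thesis by simp
    next
      case False
      hence l1: "l \<in> {(2*v+1)*2^h..<(2*v+1+1)*2^h}" using l by auto
      hence "alive (2*v+1) h x" using Suc.IH[OF v2(2)] l by blast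
      moreover have "x (2*v)" using l(3) dv2[OF l1] by simp
      ultimately show ?thesis by simp
    qed
  qed
qed

lemma bintree_alive: "bintree_fun d x = alive 1 d x"
  using alive_iff[of 1 d x] by (simp add: bintree_fun_def mult_2)

lemma a_bounds:
  fixes p :: real
  assumes "1/2 < p" "p \<le> 1"
  shows "(2*p-1)/p^2 \<le> a p h \<and> a p h \<le> 1"
proof (induction h)
  case 0
  have "(p-1)^2 \<ge> 0" by simp
  hence "2*p-1 \<le> p^2" by (simp add: power2_eq_square algebra_simps)
  hence "(2*p-1)/p^2 \<le> 1" using assms by (simp add: divide_le_eq)
  thus ?case by simp
next
  case (Suc h)
  define b where "b = (2*p-1)/p^2"
  have pp: "p^2 > 0" using assms by simp
  have hb: "b * p^2 = 2*p-1" using pp by (simp add: b_def)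
  have ab: "b \<le> a p h" "a p h \<le> 1" using Suc b_def by auto
  have b0: "b \<ge> 0" using assms by (simp add: b_def)
  have "p^2 * (a p h + b) \<le> 2*p" 
  proof -
    have "p^2 * (a p h + b) \<le> p^2 * 2" using ab b0 pp by (intro mult_left_mono) auto
    also have "\<dots> \<le> 2*p"
    proof -
      have "p * p \<le> p * 1" using assms by (intro mult_left_mono) auto
      thus ?thesis by (simp add: power2_eq_square)
    qed
    finally show ?thesis .
  qed
  hence F1: "(a p h - b) * (2*p - p^2 * (a p h + b)) \<ge> 0" using ab by simp
  have F2: "(a p h - b) * (2*p - p^2 * (a p h + b)) = 2*p*a p h - p^2*(a p h)^2 - 2*p*b + b*(b*p^2)"
    by (simp add: power2_eq_square algebra_simps)
  have F3: "1 - (1 - p * a p h)^2 = 2*p*a p h - p^2*(a p h)^2"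
    by (simp add: power2_eq_square algebra_simps)
  have "b*(b*p^2) = b*(2*p-1)" using hb by simp
  hence F4: "b*(b*p^2) = 2*p*b - b" by (simp add: algebra_simps)
  have "b \<le> 1 - (1 - p * a p h)^2" using F1 F2 F3 F4 by linarith
  moreover
  moreover have "1 - (1 - p * a p h)^2 \<le> 1" by simp
  ultimately show ?case by (simp add: b_def)
qed

lemma inputs_inp: "inputs n = inp {1..n}" by (simp add: inputs_def inp_def)
lemma prob_mu: "prob_input n p = mu p {1..n}" by (simp add: prob_input_def mu_def fun_eq_iff)

lemma mu_nonneg: "(\<And>i. 0 \<le> p i \<and> p i \<le> 1) \<Longrightarrow> mu p I x \<ge> 0"
  unfolding mu_def by (intro prod_nonneg) (auto simp: algebra_simps)

lemma Pr_union_le: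
  assumes "finite I" "\<And>i. 0 \<le> p i \<and> p i \<le> 1" "\<And>x. x \<in> inp I \<Longrightarrow> B x \<Longrightarrow> A x \<or> D x"
  shows "Pr p I B \<le> Pr p I A + Pr p I D"
  unfolding Pr_def sum.distrib[symmetric]
proof (intro sum_mono)
  fix x assume x: "x \<in> inp I"
  have "(if B x then 1 else 0) \<le> (if A x then 1 else 0) + (if D x then (1::real) else 0)"
    using assms(3)[OF x] by auto
  thus "mu p I x * (if B x then 1 else 0) \<le> mu p I x * (if A x then 1 else 0) + mu p I x * (if D x then 1 else 0)"
    using mu_nonneg[OF assms(2)] by (simp add: distrib_left[symmetric] mult_left_mono)
qed

lemma Pr_ex_le:
  assumes "finite I" "finite L" "\<And>i. 0 \<le> p i \<and> p i \<le> 1" "\<And>x. x \<in> inp I \<Longrightarrow> B x \<Longrightarrow> \<exists>l\<in>L. A l x"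
  shows "Pr p I B \<le> (\<Sum>l\<in>L. Pr p I (A l))"
proof -
  have "Pr p I B \<le> (\<Sum>x\<in>inp I. mu p I x * (\<Sum>l\<in>L. if A l x then 1 else 0))"
    unfolding Pr_def
  proof (intro sum_mono mult_left_mono)
    fix x assume x: "x \<in> inp I"
    show "0 \<le> mu p I x" using mu_nonneg[OF assms(3)] .
    show "(if B x then 1 else 0) \<le> (\<Sum>l\<in>L. if A l x then 1 else (0::real))"
    proof (cases "B x")
      case True
      then obtain l where l: "l \<in> L" "A l x" using assms(4)[OF x] by blast
      have "(\<Sum>l\<in>{l}. if A l x then 1 else (0::real)) \<le> (\<Sum>l\<in>L. if A l x then 1 else 0)"
        using l assms(2) by (intro sum_mono2) auto
      thus ?thesis using True l by simp
    qed (simp add: sum_nonneg)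
  qed
  also have "\<dots> = (\<Sum>l\<in>L. Pr p I (A l))"
    unfolding Pr_def sum_distrib_left by (subst sum.swap) (simp add: mult.commute)
  finally show ?thesis .
qed

lemma sum_ind_le: "(\<Sum>k<m. if k < N then 1 else (0::real)) = real (min m N)"
  by (induction m) (auto simp: min_def)

lemma sum_lin: "(\<Sum>k<m. P - real k * q) = real m * P - q * real m * (real m - 1) / 2"
  by (induction m) (auto simp: algebra_simps diff_divide_distrib add_divide_distrib)

definition path :: "nat \<Rightarrow> nat \<Rightarrow> nat set" where
  "path d l = (\<lambda>k. l div 2^k - 1) ` {..<d}"

lemma leaf_div_ge2:
  assumes "(l::nat) \<ge> 2^d" "k < (d::nat)"
  shows "l div 2^k \<ge> 2"
proof -
  have "(2::nat)^(d-k) = 2^d div 2^k" using assms by (simp add: power_diff)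
  also have "\<dots> \<le> l div 2^k" using assms by (intro div_le_mono) auto
  finally have "2^(d-k) \<le> l div 2^k" .
  moreover have "(2::nat)^1 \<le> 2^(d-k)" using assms by (intro power_increasing) auto
  ultimately show ?thesis by (metis order_trans power_one_right)
qed

lemma leaf_div_mono:
  assumes "(l::nat) \<ge> 2^d" "k1 < k2" "k2 < (d::nat)"
  shows "l div 2^k2 < l div 2^k1"
proof -
  have "(2::nat)^k2 = 2^k1 * 2^(k2-k1)" using assms by (simp add: power_add[symmetric])
  hence "l div 2^k2 = (l div 2^k1) div 2^(k2-k1)" by (simp add: div_mult2_eq)
  also have "\<dots> \<le> (l div 2^k1) div 2" using assms by (intro div_le_half) auto
  also have "\<dots> < l div 2^k1" using leaf_div_ge2[OF assms(1), of k1] assms by auto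
  finally show ?thesis .
qed

lemma path_props:
  assumes "(l::nat) \<in> {2^d..<2^(d+1)}"
  shows "path d l \<subseteq> {1..2^(d+1)-2}" "card (path d l) = d"
proof -
  show "path d l \<subseteq> {1..2^(d+1)-2}"
  proof
    fix e assume "e \<in> path d l"
    then obtain k where k: "k < d" "e = l div 2^k - 1" by (auto simp: path_def)
    have "l div 2^k \<ge> 2" using leaf_div_ge2[of d l k] assms k by auto
    moreover have "l div 2^k \<le> l" by simp
    moreover have "l < 2^(d+1)" using assms by simp
    ultimately show "e \<in> {1..2^(d+1)-2}" using k(2) by (simp only: atLeastAtMost_iff) arith
  qed
  have "inj_on (\<lambda>k. l div 2^k - 1) {..<d}"
  proof (rule inj_onI)
    fix k1 k2 assume k: "k1 \<in> {..<d}" "k2 \<in> {..<d}" "l div 2^k1 - 1 = l div 2^k2 - 1"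
    have "l div 2^k1 \<ge> 2" "l div 2^k2 \<ge> 2" using leaf_div_ge2[of d l] assms k by auto
    hence eq: "l div 2^k1 = l div 2^k2" using k by linarith
    show "k1 = k2"
    proof (rule ccontr)
      assume "k1 \<noteq> k2"
      hence "k1 < k2 \<or> k2 < k1" by auto
      moreover have "l \<ge> 2^d" "k1 < d" "k2 < d" using assms k by auto
      ultimately show False using leaf_div_mono[of d l k1 k2] leaf_div_mono[of d l k2 k1] eq by auto
    qed
  qed
  thus "card (path d l) = d" unfolding path_def by (simp add: card_image)
qed

lemma len_sigma: "\<sigma> \<in> strategies n \<Longrightarrow> length \<sigma> = n"
  unfolding strategies_def using distinct_card by fastforce

lemma det_full: "\<sigma> \<in> strategies n \<Longrightarrow> x \<in> inputs n \<Longrightarrow> determined f n (set (take n \<sigma>)) x"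
proof -
  assume s: "\<sigma> \<in> strategies n" and x: "x \<in> inputs n"
  have "set (take n \<sigma>) = {1..n}" using s len_sigma[OF s] by (simp add: strategies_def)
  moreover have "y = x" if "y \<in> inputs n" "\<forall>i\<in>{1..n}. y i = x i" for y
    using that x by (auto simp: inputs_def fun_eq_iff)
  ultimately show ?thesis unfolding determined_def by auto
qed

lemma NT_det:
  assumes s: "\<sigma> \<in> strategies n" and x: "x \<in> inputs n"
    and le: "length (take (num_tests f n \<sigma> x) \<sigma>) \<le> k"
  shows "determined f n (set (take k \<sigma>)) x"
proof -
  let ?N = "num_tests f n \<sigma> x"
  have dN: "determined f n (set (take ?N \<sigma>)) x" and Nle: "?N \<le> n"
    unfolding num_tests_def using det_full[OF s x, of f] by (auto intro: LeastI Least_le)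
  hence "?N \<le> k" using le len_sigma[OF s] by simp
  hence "set (take ?N \<sigma>) \<subseteq> set (take k \<sigma>)" by (rule set_take_subset_set_take)
  thus ?thesis using dN unfolding determined_def by blast
qed

lemma leaf_exists:
  assumes x: "x \<in> inputs n" and f: "bintree_fun d x" and det: "determined (bintree_fun d) n S x"
  shows "\<exists>l\<in>{2^d..<2^(d+1)}. path d l \<subseteq> S \<and> (\<forall>e\<in>path d l. x e)"
proof -
  define y where "y = (\<lambda>i. i \<in> S \<and> x i)"
  have "y \<in> inputs n" using x by (auto simp: y_def inputs_def)
  moreover have "\<forall>i\<in>S. y i = x i" by (simp add: y_def)
  ultimately have "bintree_fun d y" using det f unfolding determined_def by blast
  then obtain l where "l \<in> {2^d..<2^(d+1)}" "\<forall>k<d. y (l div 2^k - 1)"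
    unfolding bintree_fun_def by blast
  thus ?thesis unfolding path_def y_def by blast
qed

lemma tail_bound:
  assumes d: "d \<ge> 1" and n: "n = 2^(d+1)-2" and s: "\<sigma> \<in> strategies n" and p0: "0 \<le> p0" "p0 \<le> 1"
  shows "Pr (\<lambda>_. p0) {1..n} (\<lambda>x. bintree_fun d x \<and> length (take (num_tests (bintree_fun d) n \<sigma> x) \<sigma>) \<le> k)
          \<le> real k * p0^d"
proof -
  define S where "S = set (take k \<sigma>)"
  define L where "L = {l\<in>{2^d..<2^(d+1)}. path d l \<subseteq> S}"
  have fL: "finite L" by (simp add: L_def)
  have "Pr (\<lambda>_. p0) {1..n} (\<lambda>x. bintree_fun d x \<and> length (take (num_tests (bintree_fun d) n \<sigma> x) \<sigma>) \<le> k)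
      \<le> (\<Sum>l\<in>L. Pr (\<lambda>_. p0) {1..n} (\<lambda>x. \<forall>e\<in>path d l. x e))"
  proof (rule Pr_ex_le)
    fix x assume x: "x \<in> inp {1..n}" and B: "bintree_fun d x \<and> length (take (num_tests (bintree_fun d) n \<sigma> x) \<sigma>) \<le> k"
    have xi: "x \<in> inputs n" using x by (simp add: inputs_inp)
    have "determined (bintree_fun d) n S x" unfolding S_def using NT_det[OF s xi] B by blast
    thus "\<exists>l\<in>L. \<forall>e\<in>path d l. x e" using leaf_exists[OF xi] B unfolding L_def by blast
  qed (use fL p0 in auto)
  also have "\<dots> = (\<Sum>l\<in>L. p0^d)"
  proof (rule sum.cong[OF refl])
    fix l assume "l \<in> L"
    hence l: "l \<in> {2^d..<2^(d+1)}" by (simp add: L_def)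
    have "Pr (\<lambda>_. p0) {1..n} (\<lambda>x. \<forall>e\<in>path d l. x e) = (\<Prod>e\<in>path d l. p0)"
      using path_props(1)[OF l] n by (intro Pr_path) auto
    thus "Pr (\<lambda>_. p0) {1..n} (\<lambda>x. \<forall>e\<in>path d l. x e) = p0^d" using path_props(2)[OF l] by simp
  qed
  also have "\<dots> = real (card L) * p0^d" by simp
  also have "\<dots> \<le> real k * p0^d"
  proof -
    have "inj_on (\<lambda>l. l - 1) L" by (rule inj_onI) (auto simp: L_def)
    moreover have "(\<lambda>l. l - 1) ` L \<subseteq> S"
    proof
      fix e assume "e \<in> (\<lambda>l. l - 1) ` L"
      then obtain l where l: "l \<in> L" "e = l - 1" by blast
      have "l div 2^0 - 1 \<in> path d l" using d unfolding path_def by (intro imageI) auto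
      thus "e \<in> S" using l by (auto simp: L_def)
    qed
    ultimately have "card L \<le> card S" by (intro card_inj_on_le) (auto simp: S_def)
    also have "card S \<le> k" unfolding S_def by (metis card_length length_take min.boundedE)
    finally show ?thesis using p0 by (intro mult_right_mono) auto
  qed
  finally show ?thesis .
qed

lemma gen_lin: "(A::real) - M \<le> B - M \<Longrightarrow> T + t \<le> 2*B + 2*M \<Longrightarrow> T \<le> T + t \<Longrightarrow> 0 \<le> T \<Longrightarrow> T/8 \<le> B - (A - M)/2"
  by (simp add: field_simps)

lemma arith1:
  fixes M t :: real
  assumes "1 \<le> M" "M \<le> t" "t < M + 1"
  shows "t^2/8 \<le> M*t - M*(M-1)/2"
proof -
  have h1: "M*(M-1) \<le> M*(t-1)" using assms by (intro mult_left_mono) auto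
  have h2: "t \<le> 2*M" using assms by linarith
  have h3: "t*(t+1) \<le> (2*M)*(t+1)" using assms h2 by (intro mult_right_mono) auto
  have h4: "t*t \<le> t*(t+1)" using assms by (intro mult_left_mono) auto
  have e1: "M*(t-1) = M*t - M" by (simp add: algebra_simps)
  have e2: "(2*M)*(t+1) = 2*(M*t) + 2*M" by (simp add: algebra_simps)
  have e3: "t*(t+1) = t*t + t" by (simp add: algebra_simps)
  have "t^2 = t*t" by (simp add: power2_eq_square)
  moreover have "t*t \<ge> 0" by simp
  moreover have "M*(M-1) = M*M - M" by (simp add: algebra_simps)
  moreover have "t*t/8 \<le> M*t - (M*M - M)/2"
  proof -
    have a1: "M*M - M \<le> M*t - M" using h1 e1 \<open>M*(M-1) = M*M - M\<close> by linarith
    have a2: "t*t + t \<le> 2*(M*t) + 2*M" using h3 e2 e3 by linarith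
    have a3: "t*t \<le> t*t + t" using h4 e3 by linarith
    show ?thesis using gen_lin[OF a1 a2 a3 \<open>t*t \<ge> 0\<close>] .
  qed
  ultimately show ?thesis by simp
qed

lemma finite_strategies: "finite (strategies n)"
proof -
  have "strategies n \<subseteq> {xs. set xs \<subseteq> {1..n} \<and> distinct xs}" by (auto simp: strategies_def)
  thus ?thesis using finite_subset_distinct[of "{1..n}"] finite_subset by auto
qed

lemma strategies_ne: "[1..<n+1] \<in> strategies n"
  by (auto simp: strategies_def)

lemma sum_list_ones: "(\<Sum>i\<leftarrow>xs. (1::real)) = real (length xs)"
  by (induction xs) auto

theorem mainTheorem13:
  fixes \<epsilon> :: real and d :: nat
  assumes "0 < \<epsilon>" and "\<epsilon> \<le> 1/2" and "d \<ge> 1"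
    and "((1 + \<epsilon>) / 2) ^ d \<le> \<epsilon>"
  shows "OPT_N (bintree_fun d) (2^(d+1) - 2) (\<lambda>_. 1) (\<lambda>_. (1 + \<epsilon>) / 2)
           \<ge> \<epsilon>^2 / (8 * ((1 + \<epsilon>) / 2) ^ d)"
proof -
  define p0 where "p0 = (1 + \<epsilon>) / 2"
  define q where "q = p0 ^ d"
  define n where "n = (2::nat)^(d+1) - 2"
  define f where "f = bintree_fun d"
  have p0b: "1/2 < p0" "p0 \<le> 1" "0 \<le> p0" using assms by (auto simp: p0_def)
  have q0: "q > 0" using p0b by (simp add: q_def)
  have qe: "q \<le> \<epsilon>" using assms by (simp add: q_def p0_def)
  have pr01: "\<And>i. 0 \<le> (\<lambda>_. p0) i \<and> (\<lambda>_. p0) i \<le> 1" using p0b by auto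
  have P1: "Pr (\<lambda>_. p0) {1..n} f \<ge> \<epsilon>"
  proof -
    have "Pr (\<lambda>_. p0) {1..n} f = Pr (\<lambda>_. p0) {1..n} (alive 1 d)"
      by (intro Pr_cong) (simp add: f_def bintree_alive)
    also have "\<dots> = Pr (\<lambda>_. p0) (C 1 d) (alive 1 d)"
    proof (rule Pr_marg)
      show "C 1 d \<subseteq> {1..n}"
      proof
        fix e assume "e \<in> C 1 d"
        hence "1 \<le> e \<and> e + 1 < 2 * 2^d" using C_bound[of 1 e d] by simp
        thus "e \<in> {1..n}" unfolding n_def by auto
      qed
    qed (auto simp: dep_alive)
    also have "\<dots> = a p0 d" by (rule Pr_alive) simp
    finally have eq: "Pr (\<lambda>_. p0) {1..n} f = a p0 d" .
    have "(2*p0-1)/p0^2 \<le> a p0 d" using a_bounds[OF p0b(1,2)] by blast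
    moreover have "2*p0 - 1 \<le> (2*p0-1)/p0^2"
    proof -
      have "p0^2 \<le> 1" using p0b by (simp add: power_le_one)
      hence "(2*p0-1) * p0^2 \<le> (2*p0-1) * 1" using p0b by (intro mult_left_mono) auto
      thus ?thesis using p0b by (simp add: le_divide_eq)
    qed
    moreover have "2*p0 - 1 = \<epsilon>" by (simp add: p0_def field_simps)
    ultimately show ?thesis using eq by simp
  qed
  define t where "t = \<epsilon> / q"
  have t1: "t \<ge> 1" using qe q0 by (simp add: t_def)
  define m where "m = nat \<lfloor>t\<rfloor>"
  have mt: "real m \<le> t" "t < real m + 1" "1 \<le> real m" using t1
    by (auto simp: m_def)
  have each: "expected_cost f n (\<lambda>_. 1) (\<lambda>_. p0) \<sigma> \<ge> \<epsilon>^2 / (8 * q)" if s: "\<sigma> \<in> strategies n" for \<sigma>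
  proof -
    define NT where "NT x = length (take (num_tests f n \<sigma> x) \<sigma>)" for x
    have E: "expected_cost f n (\<lambda>_. 1) (\<lambda>_. p0) \<sigma> = (\<Sum>x\<in>inp {1..n}. mu (\<lambda>_. p0) {1..n} x * real (NT x))"
      unfolding expected_cost_def strat_cost_def inputs_inp prob_mu NT_def sum_list_ones ..
    have "(\<Sum>x\<in>inp {1..n}. mu (\<lambda>_. p0) {1..n} x * real (NT x))
        \<ge> (\<Sum>x\<in>inp {1..n}. mu (\<lambda>_. p0) {1..n} x * (\<Sum>k<m. if k < NT x then 1 else 0))"
    proof (intro sum_mono mult_left_mono)
      fix x show "(\<Sum>k<m. if k < NT x then 1 else (0::real)) \<le> real (NT x)"
        unfolding sum_ind_le by simp
      show "0 \<le> mu (\<lambda>_. p0) {1..n} x" using mu_nonneg[OF pr01] .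
    qed
    also have "(\<Sum>x\<in>inp {1..n}. mu (\<lambda>_. p0) {1..n} x * (\<Sum>k<m. if k < NT x then 1 else 0))
        = (\<Sum>k<m. Pr (\<lambda>_. p0) {1..n} (\<lambda>x. k < NT x))"
      unfolding Pr_def sum_distrib_left by (subst sum.swap) (simp add: mult.commute)
    finally have E1: "(\<Sum>k<m. Pr (\<lambda>_. p0) {1..n} (\<lambda>x. k < NT x)) \<le> expected_cost f n (\<lambda>_. 1) (\<lambda>_. p0) \<sigma>"
      using E by simp
    have "(\<Sum>k<m. \<epsilon> - real k * q) \<le> (\<Sum>k<m. Pr (\<lambda>_. p0) {1..n} (\<lambda>x. k < NT x))"
    proof (intro sum_mono)
      fix k assume "k \<in> {..<m}"
      have "Pr (\<lambda>_. p0) {1..n} f \<le> Pr (\<lambda>_. p0) {1..n} (\<lambda>x. k < NT x) + Pr (\<lambda>_. p0) {1..n} (\<lambda>x. f x \<and> NT x \<le> k)"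
        by (rule Pr_union_le) (use pr01 in auto)
      moreover have "Pr (\<lambda>_. p0) {1..n} (\<lambda>x. f x \<and> NT x \<le> k) \<le> real k * q"
        unfolding f_def NT_def q_def using tail_bound[OF assms(3) n_def s p0b(3,2)] by simp
      ultimately show "\<epsilon> - real k * q \<le> Pr (\<lambda>_. p0) {1..n} (\<lambda>x. k < NT x)" using P1 by linarith
    qed
    moreover have "(\<Sum>k<m. \<epsilon> - real k * q) = q * (real m * t - real m * (real m - 1) / 2)"
      unfolding sum_lin using q0 by (simp add: t_def field_simps)
    moreover have "\<epsilon>^2 / (8 * q) = q * (t^2 / 8)"
      using q0 by (simp add: t_def field_simps power2_eq_square)
    moreover have "q * (t^2 / 8) \<le> q * (real m * t - real m * (real m - 1) / 2)"
      using arith1[OF mt(3,1,2)] q0 by (intro mult_left_mono) auto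
    ultimately show ?thesis using E1 by linarith
  qed
  have "\<epsilon>^2 / (8 * q) \<le> Min (expected_cost f n (\<lambda>_. 1) (\<lambda>_. p0) ` strategies n)"
    using finite_strategies strategies_ne each by (subst Min_ge_iff) auto
  thus ?thesis unfolding OPT_N_def p0_def q_def n_def f_def .
qed


end
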